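(* Consider the analog decentralized learning protocol described in the context, with arbitrary step sizes $\eta^{(t)}>0$, $\zeta^{(t)}\ge 0$ and arbitrary transmit powers $P^{(t)}>0$. Then for every iteration $t\ge 0$ and every device $i\in\mathcal{V}$, the analog consensus update $$\boldsymbol\theta_i^{(t+1)}=\boldsymbol\theta_i^{(t+1/2)}+\zeta^{(t)}\big(w_{ii}\hat{\boldsymbol\theta}_i^{(t+1)}+\hat{\boldsymbol y}_i^{(t+1)}-\hat{\boldsymbol\theta}_i^{(t+1)}\big)$$ is equivalent to $$\boldsymbol\theta_i^{(t+1)}=\boldsymbol\theta_i^{(t+1/2)}+\zeta^{(t)}\sum_{j\in\mathcal{N}_i\cup\{i\}}w_{ij}\big(\hat{\boldsymbol\theta}_j^{(t+1)}-\hat{\boldsymbol\theta}_i^{(t+1)}\big)+\zeta^{(t)}\sum_{\tau=0}^{t}\frac{m}{d}(\boldsymbol A^{(\tau)})^T\tilde{\boldsymbol n}_i^{(\tau)},$$ where $\tilde{\boldsymbol n}_i^{(\tau)}\in\mathbb{R}^{m}$ is an effective noise vector which (conditionally on the fading coefficients and on the vectors $\boldsymbol u_j^{(\tau)}$) is distributed as $\mathcal{N}(\boldsymbol 0,\tilde N_{0i}^{(\tau)}\boldsymbol I)$ with $$\tilde N_{0i}^{(t)}=\frac{1}{2}\frac{N_0}{NP^{(t)}}\Bigg(\sum_{s\in\mathcal{S}_i^{\rm AR}}\max_{j\in\mathcal{N}_i^{(s)}}\Big\{|\mathcal{S}_j^{\rm Tx}|\,w_{ij}^2\frac{\|\boldsymbol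 u_j^{(t)}\|^2}{|h_{ij}^{\prime(t)}|^2}\Big\}+\sum_{s\in\mathcal{S}_i^{\rm BR}}|\mathcal{S}_{j_s}^{\rm Tx}|\,w_{ij_s}^2\frac{\|\boldsymbol u_{j_s}^{(t)}\|^2}{|h_{ij_s}^{\prime(t)}|^2}\Bigg),$$ with $\boldsymbol u_j^{(t)}=\boldsymbol\theta_j^{(t+1/2)}-\hat{\boldsymbol\theta}_j^{(t)}$ and $j_s$ the (unique) neighbor of $i$ broadcasting to $i$ in slot $s\in\mathcal{S}_i^{\rm BR}$.
   Context: Setting. $K$ devices $\mathcal{V}=\{1,\dots,K\}$ form a connected undirected graph $\mathcal{G}(\mathcal{V},\mathcal{E})$; $\mathcal{N}_i$ is the neighbor set of $i$. $\boldsymbol W=\boldsymbol W^T\in\mathbb{R}^{K\times K}$ is a doubly stochastic mixing matrix with entries $w_{ij}\ge 0$, $w_{ij}=0$ if $j\notin\mathcal{N}_i\cup\{i\}$, and $\|\boldsymbol W-\boldsymbol 1\boldsymbol 1^T/K\|_2<1$. Each device $i$ has a local function $f_i:\mathbb{R}^d\to\mathbb{R}$ and a stochastic (mini-batch) gradient $\hat\nabla f_i$. Compression (random linear coding). Let $m\le d$ and $\boldsymbol H\in\{\pm1\}^{m\times d}$ with $\frac1d\boldsymbol H\boldsymbol H^T=\boldsymbol I$. For each iteration $t$, $\boldsymbol A^{(t)}=\frac{1}{\sqrt m}\boldsymbol H\boldsymbol R^{(t)}$ where $\boldsymbol R^{(t)}$ is diagonal with i.i.d. entries uniform on $\{\pm1\}$,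 shared by all devices. Channels. For $(i,j)\in\mathcal{E}$, $h_{ij}^{\prime(t)}\in\mathbb{C}\setminus\{0\}$ is the channel coefficient between $i$ and $j$ in iteration $t$ (constant within the iteration). Each iteration uses a communication block of $N$ channel uses split into $M=2n$ slots of $m=N/M$ channel uses each; each device has energy budget $NP^{(t)}$ per block. Received noise vectors $\boldsymbol n_j^{(t,s)}\sim\mathcal{CN}(\boldsymbol 0,N_0\boldsymbol I_m)$ are i.i.d. over devices, slots and iterations, independent of everything else. Schedule. Each device $i$ has disjoint sets of odd slots $\mathcal{S}_i^{\rm AT}$ (transmit in AirComp mode), $\mathcal{S}_i^{\rm AR}$ (receive in AirComp mode, as a center node), and even slots $\mathcal{S}_i^{\rm BT}$ (broadcast), $\mathcal{S}_i^{\rm BR}$ (receive a broadcast); $\mathcal{S}_i^{\rm Tx}=\mathcal{S}_i^{\rm AT}\cup\mathcal{S}_i^{\rm BT}$. For $s\in\mathcal{S}_j^{\rm AR}$, $\mathcal{N}_j^{(s)}\subseteq\mathcal{N}_j$ is the set of neighbors of $j$ transmitting to $j$ in AirComp mode in slot $s$; for $s\in\mathcal{S}_j^{\rm BR}$ there is exactly one neighbor $i_s\in\mathcal{N}_j$ broadcasting to $j$ in slot $s$. For each $j$, the sets $\mathcal{N}_j^{(s)}$ ($s\in\mathcal{S}_j^{\rm AR}$) and the singletons $\{i_s\}$ ($s\in\mathcal{S}_j^{\rm BR}$) partition $\mathcal{N}_j$. Protocol. Initialize $\boldsymbol\theta_i^{(0)}$ arbitrary, $\hat{\boldsymbol\theta}_i^{(0)}=\boldsymbol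 0$, $\hat{\boldsymbol y}_i^{(0)}=\boldsymbol 0$. At iteration $t$: (1) $\boldsymbol\theta_i^{(t+1/2)}=\boldsymbol\theta_i^{(t)}-\eta^{(t)}\hat\nabla f_i(\boldsymbol\theta_i^{(t)})$ and $\boldsymbol u_i^{(t)}=\boldsymbol\theta_i^{(t+1/2)}-\hat{\boldsymbol\theta}_i^{(t)}$. (2) Odd slot $s\in\mathcal{S}_j^{\rm AR}$: each $i\in\mathcal{N}_j^{(s)}$ sends $\boldsymbol x_{ij}^{(t,s)}=\frac{\sqrt{\gamma_j^{(t,s)}}}{h_{ij}^{\prime(t)}}w_{ji}\boldsymbol A^{(t)}\boldsymbol u_i^{(t)}$, $j$ receives $\boldsymbol y_j^{(t,s)}=\sqrt{\gamma_j^{(t,s)}}\sum_{i\in\mathcal{N}_j^{(s)}}w_{ji}\boldsymbol A^{(t)}\boldsymbol u_i^{(t)}+\boldsymbol n_j^{(t,s)}$ and forms $\hat{\boldsymbol y}_j^{(t,s)}=\frac md(\boldsymbol A^{(t)})^T\Re\{\boldsymbol y_j^{(t,s)}/\sqrt{\gamma_j^{(t,s)}}\}$. (3) Even slot $s\in\mathcal{S}_i^{\rm BT}$: $i$ sends $\boldsymbol x_i^{(t,s)}=\sqrt{\alpha_i^{(t,s)}}\boldsymbol A^{(t)}\boldsymbol u_i^{(t)}$; each receiving neighbor $j$ gets $\boldsymbol y_{ij}^{(t,s)}=\sqrt{\alpha_i^{(t,s)}}h_{ij}^{\prime(t)}\boldsymbol A^{(t)}\boldsymbol u_i^{(t)}+\boldsymbol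 n_j^{(t,s)}$ and forms $\hat{\boldsymbol y}_{ij}^{(t,s)}=w_{ji}\frac md(\boldsymbol A^{(t)})^T\Re\{\boldsymbol y_{ij}^{(t,s)}/(\sqrt{\alpha_i^{(t,s)}}h_{ij}^{\prime(t)})\}$. (4) $\hat{\boldsymbol y}_j^{(t+1)}=\hat{\boldsymbol y}_j^{(t)}+\sum_{s\in\mathcal{S}_j^{\rm AR}}\hat{\boldsymbol y}_j^{(t,s)}+\sum_{s\in\mathcal{S}_j^{\rm BR}}\hat{\boldsymbol y}_{i_sj}^{(t,s)}$, $\hat{\boldsymbol\theta}_j^{(t+1)}=\hat{\boldsymbol\theta}_j^{(t)}+\frac md(\boldsymbol A^{(t)})^T\boldsymbol A^{(t)}\boldsymbol u_j^{(t)}$, and $\boldsymbol\theta_j^{(t+1)}=\boldsymbol\theta_j^{(t+1/2)}+\zeta^{(t)}(w_{jj}\hat{\boldsymbol\theta}_j^{(t+1)}+\hat{\boldsymbol y}_j^{(t+1)}-\hat{\boldsymbol\theta}_j^{(t+1)})$. Power scaling (equal power per transmit slot, with the constraints $\mathbb{E}_{\boldsymbol A}\|\boldsymbol x\|^2\le NP^{(t)}/|\mathcal{S}_i^{\rm Tx}|$ met with the largest feasible factors): $\gamma_j^{(t,s)}=\min_{i\in\mathcal{N}_j^{(s)}}\frac{NP^{(t)}|h_{ij}^{\prime(t)}|^2}{|\mathcal{S}_i^{\rm Tx}|w_{ji}^2\|\boldsymbol u_i^{(t)}\|^2}$ and $\alpha_i^{(t,s)}=\frac{NP^{(t)}}{|\mathcal{S}_i^{\rm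 Tx}|\|\boldsymbol u_i^{(t)}\|^2}$ (assumed well defined). *)

theory Defs
  imports "HOL-Analysis.Analysis" "HOL-Probability.Probability"
begin

text \<open>
  'v : device index type (K = CARD('v) devices), 'd : model dimension index (d = CARD('d)),
  'm : code length index (m = CARD('m)).  Slots are natural numbers 1..M with M = 2*nh.
  Convention: W i j = w_ij ; hc t i j = channel coefficient h'_ij in iteration t
  (i = transmitter, j = receiver in the protocol formulas); noise t s j = n_j^(t,s).
\<close>

record ('v, 'd, 'm) lsys =
  Wt    :: "'v \<Rightarrow> 'v \<Rightarrow> real"
  Nb    :: "'v \<Rightarrow> 'v set"
  Hm    :: "real^'d^'m"
  Rd    :: "nat \<Rightarrow> real^'d"
  hc    :: "nat \<Rightarrow> 'v \<Rightarrow> 'v \<Rightarrow> complex"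
  nh    :: nat
  SAT   :: "'v \<Rightarrow> nat set"
  SAR   :: "'v \<Rightarrow> nat set"
  SBT   :: "'v \<Rightarrow> nat set"
  SBR   :: "'v \<Rightarrow> nat set"
  NA    :: "'v \<Rightarrow> nat \<Rightarrow> 'v set"
  src   :: "'v \<Rightarrow> nat \<Rightarrow> 'v"
  Pw    :: "nat \<Rightarrow> real"
  N0    :: real
  eta   :: "nat \<Rightarrow> real"
  zeta  :: "nat \<Rightarrow> real"
  grad  :: "nat \<Rightarrow> 'v \<Rightarrow> real^'d \<Rightarrow> real^'d"
  theta0 :: "'v \<Rightarrow> real^'d"
  noise :: "nat \<Rightarrow> nat \<Rightarrow> 'v \<Rightarrow> complex^'m"

definition dd :: "('v,'d::finite,'m::finite) lsys \<Rightarrow> real" where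
  "dd S = real CARD('d)"

definition mm :: "('v,'d::finite,'m::finite) lsys \<Rightarrow> real" where
  "mm S = real CARD('m)"

definition Mslots :: "('v,'d::finite,'m::finite) lsys \<Rightarrow> nat" where
  "Mslots S = 2 * nh S"

definition Nuse :: "('v,'d::finite,'m::finite) lsys \<Rightarrow> real" where
  "Nuse S = real (Mslots S) * real CARD('m)"

definition Tx :: "('v,'d::finite,'m::finite) lsys \<Rightarrow> 'v \<Rightarrow> nat set" where
  "Tx S i = SAT S i \<union> SBT S i"

definition diagm :: "real^'n \<Rightarrow> real^'n^'n" where
  "diagm r = (\<chi> i j. if i = j then r $ i else 0)"

definition Amat :: "('v,'d::finite,'m::finite) lsys \<Rightarrow> nat \<Rightarrow> real^'d^'m" where
  "Amat S t = (1 / sqrt (mm S)) *\<^sub>R (Hm S ** diagm (Rd S t))"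

definition cvec :: "real^'n \<Rightarrow> complex^'n" where
  "cvec x = (\<chi> k. complex_of_real (x $ k))"

definition Re_vec :: "complex^'n \<Rightarrow> real^'n" where
  "Re_vec z = (\<chi> k. Re (z $ k))"

definition decomp :: "('v,'d::finite,'m::finite) lsys \<Rightarrow> nat \<Rightarrow> real^'m \<Rightarrow> real^'d" where
  "decomp S t x = (mm S / dd S) *\<^sub>R (transpose (Amat S t) *v x)"

definition gam :: "('v,'d::finite,'m::finite) lsys \<Rightarrow> nat \<Rightarrow> ('v \<Rightarrow> real^'d) \<Rightarrow> 'v \<Rightarrow> nat \<Rightarrow> real" where
  "gam S t u j s = Min ((\<lambda>i. Nuse S * Pw S t * (cmod (hc S t i j))\<^sup>2 /
        (real (card (Tx S i)) * (Wt S j i)\<^sup>2 * (norm (u i))\<^sup>2)) ` NA S j s)"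

definition alp :: "('v,'d::finite,'m::finite) lsys \<Rightarrow> nat \<Rightarrow> ('v \<Rightarrow> real^'d) \<Rightarrow> 'v \<Rightarrow> real" where
  "alp S t u i = Nuse S * Pw S t / (real (card (Tx S i)) * (norm (u i))\<^sup>2)"

definition thalf :: "('v,'d::finite,'m::finite) lsys \<Rightarrow> nat \<Rightarrow> ('v \<Rightarrow> real^'d) \<Rightarrow> 'v \<Rightarrow> real^'d" where
  "thalf S t th i = th i - eta S t *\<^sub>R grad S t i (th i)"

definition x_air :: "('v,'d::finite,'m::finite) lsys \<Rightarrow> nat \<Rightarrow> ('v \<Rightarrow> real^'d) \<Rightarrow> 'v \<Rightarrow> 'v \<Rightarrow> nat \<Rightarrow> complex^'m" where
  "x_air S t u i j s = (complex_of_real (sqrt (gam S t u j s)) / hc S t i j * complex_of_real (Wt S j i))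
        *s cvec (Amat S t *v u i)"

definition y_air :: "('v,'d::finite,'m::finite) lsys \<Rightarrow> nat \<Rightarrow> ('v \<Rightarrow> real^'d) \<Rightarrow> 'v \<Rightarrow> nat \<Rightarrow> complex^'m" where
  "y_air S t u j s = (\<Sum>i\<in>NA S j s. hc S t i j *s x_air S t u i j s) + noise S t s j"

definition yhat_air :: "('v,'d::finite,'m::finite) lsys \<Rightarrow> nat \<Rightarrow> ('v \<Rightarrow> real^'d) \<Rightarrow> 'v \<Rightarrow> nat \<Rightarrow> real^'d" where
  "yhat_air S t u j s = decomp S t (Re_vec (complex_of_real (1 / sqrt (gam S t u j s)) *s y_air S t u j s))"

definition x_bc :: "('v,'d::finite,'m::finite) lsys \<Rightarrow> nat \<Rightarrow> ('v \<Rightarrow> real^'d) \<Rightarrow> 'v \<Rightarrow> complex^'m" where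
  "x_bc S t u i = complex_of_real (sqrt (alp S t u i)) *s cvec (Amat S t *v u i)"

definition y_bc :: "('v,'d::finite,'m::finite) lsys \<Rightarrow> nat \<Rightarrow> ('v \<Rightarrow> real^'d) \<Rightarrow> 'v \<Rightarrow> 'v \<Rightarrow> nat \<Rightarrow> complex^'m" where
  "y_bc S t u i j s = hc S t i j *s x_bc S t u i + noise S t s j"

definition yhat_bc :: "('v,'d::finite,'m::finite) lsys \<Rightarrow> nat \<Rightarrow> ('v \<Rightarrow> real^'d) \<Rightarrow> 'v \<Rightarrow> 'v \<Rightarrow> nat \<Rightarrow> real^'d" where
  "yhat_bc S t u i j s = Wt S j i *\<^sub>R decomp S t
      (Re_vec ((1 / (complex_of_real (sqrt (alp S t u i)) * hc S t i j)) *s y_bc S t u i j s))"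

text \<open>State = (theta, theta_hat, y_hat).\<close>
type_synonym ('v,'d) lstate = "('v \<Rightarrow> real^'d) \<times> ('v \<Rightarrow> real^'d) \<times> ('v \<Rightarrow> real^'d)"

definition ustate :: "('v,'d::finite,'m::finite) lsys \<Rightarrow> nat \<Rightarrow> ('v,'d) lstate \<Rightarrow> 'v \<Rightarrow> real^'d" where
  "ustate S t st i = thalf S t (fst st) i - fst (snd st) i"

definition step :: "('v,'d::finite,'m::finite) lsys \<Rightarrow> nat \<Rightarrow> ('v,'d) lstate \<Rightarrow> ('v,'d) lstate" where
  "step S t st =
     (let u = ustate S t st;
          yh' = (\<lambda>j. snd (snd st) j + (\<Sum>s\<in>SAR S j. yhat_air S t u j s)
                                    + (\<Sum>s\<in>SBR S j. yhat_bc S t u (src S j s) j s));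
          th' = (\<lambda>j. fst (snd st) j + decomp S t (Amat S t *v u j))
      in (\<lambda>j. thalf S t (fst st) j + zeta S t *\<^sub>R (Wt S j j *\<^sub>R th' j + yh' j - th' j), th', yh'))"

primrec run :: "('v,'d::finite,'m::finite) lsys \<Rightarrow> nat \<Rightarrow> ('v,'d) lstate" where
  "run S 0 = (theta0 S, (\<lambda>_. 0), (\<lambda>_. 0))"
| "run S (Suc t) = step S t (run S t)"

definition theta :: "('v,'d::finite,'m::finite) lsys \<Rightarrow> nat \<Rightarrow> 'v \<Rightarrow> real^'d" where
  "theta S t = fst (run S t)"

definition theta_hat :: "('v,'d::finite,'m::finite) lsys \<Rightarrow> nat \<Rightarrow> 'v \<Rightarrow> real^'d" where
  "theta_hat S t = fst (snd (run S t))"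

definition theta_half :: "('v,'d::finite,'m::finite) lsys \<Rightarrow> nat \<Rightarrow> 'v \<Rightarrow> real^'d" where
  "theta_half S t = thalf S t (theta S t)"

definition uvec :: "('v,'d::finite,'m::finite) lsys \<Rightarrow> nat \<Rightarrow> 'v \<Rightarrow> real^'d" where
  "uvec S t = ustate S t (run S t)"

text \<open>Effective noise at device i in iteration t, as a function of the vectors u_j^(t)
  and of the noise vectors z s = n_i^(t,s) received by i in the slots of iteration t.\<close>
definition eff_noise :: "('v,'d::finite,'m::finite) lsys \<Rightarrow> nat \<Rightarrow> ('v \<Rightarrow> real^'d) \<Rightarrow> 'v
      \<Rightarrow> (nat \<Rightarrow> complex^'m) \<Rightarrow> real^'m" where
  "eff_noise S t u i z =
     (\<Sum>s\<in>SAR S i. Re_vec (complex_of_real (1 / sqrt (gam S t u i s)) *s z s))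
   + (\<Sum>s\<in>SBR S i. Wt S i (src S i s) *\<^sub>R
        Re_vec ((1 / (complex_of_real (sqrt (alp S t u (src S i s))) * hc S t (src S i s) i)) *s z s))"

definition Ntil :: "('v,'d::finite,'m::finite) lsys \<Rightarrow> nat \<Rightarrow> ('v \<Rightarrow> real^'d) \<Rightarrow> 'v \<Rightarrow> real" where
  "Ntil S t u i = 1/2 * N0 S / (Nuse S * Pw S t) *
     ((\<Sum>s\<in>SAR S i. Max ((\<lambda>j. real (card (Tx S j)) * (Wt S i j)\<^sup>2 * (norm (u j))\<^sup>2
                                / (cmod (hc S t i j))\<^sup>2) ` NA S i s))
    + (\<Sum>s\<in>SBR S i. real (card (Tx S (src S i s))) * (Wt S i (src S i s))\<^sup>2
                     * (norm (u (src S i s)))\<^sup>2 / (cmod (hc S t i (src S i s)))\<^sup>2))"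

text \<open>Probability space of the fresh noise of one iteration at one receiver:
  real and imaginary parts of n^(s) $ k (s = 1..M, k \<in> 'm) are i.i.d. N(0, N0/2),
  i.e. the n^(s) are i.i.d. CN(0, N0 I_m).\<close>
definition noise_space :: "('v,'d::finite,'m::finite) lsys \<Rightarrow> (nat \<times> 'm \<times> bool \<Rightarrow> real) measure" where
  "noise_space S = (\<Pi>\<^sub>M p\<in>{1..Mslots S} \<times> (UNIV::'m set) \<times> (UNIV::bool set).
                      density lborel (normal_density 0 (sqrt (N0 S / 2))))"

definition noise_of :: "(nat \<times> 'm \<times> bool \<Rightarrow> real) \<Rightarrow> nat \<Rightarrow> complex^'m" where
  "noise_of \<omega> s = (\<chi> k. Complex (\<omega> (s, k, True)) (\<omega> (s, k, False)))"

text \<open>The Gaussian law N(0, sigma2 * I) on real^'m (also meaningful for sigma2 = 0).\<close>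
definition gauss_vec :: "real \<Rightarrow> (real^'m::finite) measure" where
  "gauss_vec sigma2 = distr (\<Pi>\<^sub>M k\<in>(UNIV::'m set). density lborel std_normal_density) borel
                          (\<lambda>g. \<chi> k. sqrt sigma2 * g k)"

definition conn_graph :: "('v::finite \<Rightarrow> 'v set) \<Rightarrow> bool" where
  "conn_graph Nb' \<longleftrightarrow> (\<forall>i j. j \<in> Nb' i \<longleftrightarrow> i \<in> Nb' j) \<and> (\<forall>i. i \<notin> Nb' i)
      \<and> (\<forall>i j. (\<lambda>a b. b \<in> Nb' a)\<^sup>*\<^sup>* i j)"

definition Wmat :: "('v::finite \<Rightarrow> 'v \<Rightarrow> real) \<Rightarrow> real^'v^'v" where
  "Wmat W = (\<chi> i j. W i j)"

definition mixing_ok :: "('v::finite \<Rightarrow> 'v set) \<Rightarrow> ('v \<Rightarrow> 'v \<Rightarrow> real) \<Rightarrow> bool" where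
  "mixing_ok Nb' W \<longleftrightarrow> (\<forall>i j. W i j = W j i) \<and> (\<forall>i j. W i j \<ge> 0)
     \<and> (\<forall>i. (\<Sum>j\<in>UNIV. W i j) = 1) \<and> (\<forall>j. (\<Sum>i\<in>UNIV. W i j) = 1)
     \<and> (\<forall>i j. j \<notin> Nb' i \<and> j \<noteq> i \<longrightarrow> W i j = 0)
     \<and> onorm (\<lambda>x. (Wmat W - (\<chi> i j. 1 / real CARD('v))) *v x) < 1"

definition coding_ok :: "('v,'d::finite,'m::finite) lsys \<Rightarrow> bool" where
  "coding_ok S \<longleftrightarrow> CARD('m) \<le> CARD('d)
     \<and> (\<forall>r c. Hm S $ r $ c \<in> {1, -1})
     \<and> (1 / dd S) *\<^sub>R (Hm S ** transpose (Hm S)) = mat 1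
     \<and> (\<forall>t k. Rd S t $ k \<in> {1, -1})"

definition schedule_ok :: "('v::finite,'d::finite,'m::finite) lsys \<Rightarrow> bool" where
  "schedule_ok S \<longleftrightarrow>
     (\<forall>i. SAT S i \<union> SAR S i \<subseteq> {s. odd s \<and> 1 \<le> s \<and> s \<le> Mslots S}
        \<and> SBT S i \<union> SBR S i \<subseteq> {s. even s \<and> 1 \<le> s \<and> s \<le> Mslots S}
        \<and> SAT S i \<inter> SAR S i = {} \<and> SBT S i \<inter> SBR S i = {})
   \<and> (\<forall>j. \<forall>s\<in>SAR S j. NA S j s \<noteq> {} \<and> NA S j s \<subseteq> Nb S j \<and> (\<forall>i\<in>NA S j s. s \<in> SAT S i))
   \<and> (\<forall>j. \<forall>s\<in>SBR S j. src S j s \<in> Nb S j \<and> s \<in> SBT S (src S j s))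
   \<and> (\<forall>j. \<forall>s\<in>SAR S j. \<forall>s'\<in>SAR S j. s \<noteq> s' \<longrightarrow> NA S j s \<inter> NA S j s' = {})
   \<and> (\<forall>j. \<forall>s\<in>SBR S j. \<forall>s'\<in>SBR S j. s \<noteq> s' \<longrightarrow> src S j s \<noteq> src S j s')
   \<and> (\<forall>j. \<forall>s\<in>SAR S j. \<forall>s'\<in>SBR S j. src S j s' \<notin> NA S j s)
   \<and> (\<forall>j. Nb S j = (\<Union>s\<in>SAR S j. NA S j s) \<union> src S j ` SBR S j)"

definition channel_ok :: "('v::finite,'d::finite,'m::finite) lsys \<Rightarrow> bool" where
  "channel_ok S \<longleftrightarrow> (\<forall>t i j. j \<in> Nb S i \<longrightarrow> hc S t i j \<noteq> 0 \<and> hc S t i j = hc S t j i)"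

definition params_ok :: "('v::finite,'d::finite,'m::finite) lsys \<Rightarrow> bool" where
  "params_ok S \<longleftrightarrow> (\<forall>t. eta S t > 0 \<and> zeta S t \<ge> 0 \<and> Pw S t > 0) \<and> N0 S > 0"

end

theory Submission
  imports Defs "HOL-Probability.Probability"
begin

lemma coord_distr:
  fixes \<sigma> :: real
  assumes s: "\<sigma> > 0" and p: "p \<in> I"
  shows "distributed (PiM I (\<lambda>_. density lborel (normal_density 0 \<sigma>))) lborel (\<lambda>\<omega>. \<omega> p) (normal_density 0 \<sigma>)"
proof -
  let ?N = "density lborel (normal_density 0 \<sigma>)"
  have d: "distr (PiM I (\<lambda>_. ?N)) ?N (\<lambda>\<omega>. \<omega> p) = ?N"
    by (rule distr_PiM_component) (rule prob_space_normal_density[OF s], rule p)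
  have "distr (PiM I (\<lambda>_. ?N)) ?N (\<lambda>\<omega>. \<omega> p) = distr (PiM I (\<lambda>_. ?N)) lborel (\<lambda>\<omega>. \<omega> p)"
    by (rule distr_cong[OF refl]) simp_all
  with d have 1: "distr (PiM I (\<lambda>_. ?N)) lborel (\<lambda>\<omega>. \<omega> p) = ?N" by simp
  have 2: "(\<lambda>x. ennreal (normal_density 0 \<sigma> x)) \<in> borel_measurable lborel" by measurable
  have a: "(\<lambda>\<omega>. \<omega> p) \<in> measurable (PiM I (\<lambda>_. ?N)) ?N"
    by (rule measurable_component_singleton[OF p])
  have b: "(\<lambda>x. x) \<in> measurable ?N lborel" by (rule measurable_ident_sets) simp
  have 3: "(\<lambda>\<omega>. \<omega> p) \<in> measurable (PiM I (\<lambda>_. ?N)) lborel"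
    using measurable_compose[OF a b] .
  show ?thesis unfolding distributed_def using 1 2 3 by (intro conjI)
qed
lemma coord_indep:
  fixes \<sigma> :: real
  assumes s: "\<sigma> > 0" and I: "I \<noteq> {}"
  shows "prob_space.indep_vars (PiM I (\<lambda>_. density lborel (normal_density 0 \<sigma>))) (\<lambda>_. borel) (\<lambda>p \<omega>. \<omega> p) I"
proof -
  let ?N = "density lborel (normal_density 0 \<sigma>)"
  interpret P: prob_space "PiM I (\<lambda>_. ?N)"
    by (intro prob_space_PiM prob_space_normal_density s)
  have rv: "(\<lambda>\<omega>. \<omega> i) \<in> measurable (PiM I (\<lambda>_. ?N)) ?N" if "i \<in> I" for i
    by (rule measurable_component_singleton[OF that])
  have d1: "distr (PiM I (\<lambda>_. ?N)) (PiM I (\<lambda>_. ?N)) (\<lambda>x. \<lambda>i\<in>I. x i) = distr (PiM I (\<lambda>_. ?N)) (PiM I (\<lambda>_. ?N)) (\<lambda>x. x)"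
  proof (rule distr_cong)
    fix x assume "x \<in> space (PiM I (\<lambda>_. ?N))"
    then have "x \<in> extensional I" by (simp add: space_PiM PiE_def)
    then show "(\<lambda>i\<in>I. x i) = x" by (rule extensional_restrict)
  qed (rule refl)+
  have d2: "PiM I (\<lambda>_. ?N) = PiM I (\<lambda>i. distr (PiM I (\<lambda>_. ?N)) ?N (\<lambda>\<omega>. \<omega> i))"
    by (rule PiM_cong[OF refl]) (rule distr_PiM_component[symmetric], rule prob_space_normal_density[OF s])
  have "P.indep_vars (\<lambda>_. ?N) (\<lambda>p \<omega>. \<omega> p) I"
    using P.indep_vars_iff_distr_eq_PiM'[OF I rv] d1 d2 by simp
  moreover have "(\<lambda>x. x) \<in> measurable ?N borel" if "i \<in> I" for i
    by (rule measurable_ident_sets) simp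
  ultimately have "P.indep_vars (\<lambda>_. borel) (\<lambda>i x. (\<lambda>x. x) (x i)) I"
    by (rule P.indep_vars_compose2)
  then show ?thesis by simp
qed

lemma lin_comb_law:
  fixes \<sigma> :: real and c :: "'i \<Rightarrow> real"
  assumes s: "\<sigma> > 0" and B: "finite B" "B \<subseteq> I"
  shows "distr (PiM I (\<lambda>_. density lborel (normal_density 0 \<sigma>))) borel (\<lambda>\<omega>. \<Sum>p\<in>B. c p * \<omega> p)
       = distr (density lborel std_normal_density) borel (\<lambda>x. sqrt (\<sigma>\<^sup>2 * (\<Sum>p\<in>B. (c p)\<^sup>2)) * x)"
proof -
  let ?M = "PiM I (\<lambda>_. density lborel (normal_density 0 \<sigma>))"
  let ?Q = "density lborel std_normal_density"
  interpret P: prob_space ?M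
    by (intro prob_space_PiM prob_space_normal_density s)
  interpret Q: prob_space ?Q
    by (rule prob_space_normal_density) simp
  define B' where "B' = {p\<in>B. c p \<noteq> 0}"
  have fin: "finite B'" and sub: "B' \<subseteq> I" using B by (auto simp: B'_def)
  have eq1: "(\<lambda>\<omega>. \<Sum>p\<in>B. c p * \<omega> p) = (\<lambda>\<omega>. \<Sum>p\<in>B'. c p * \<omega> p)"
    by (intro ext sum.mono_neutral_right) (auto simp: B'_def B)
  have eq2: "(\<Sum>p\<in>B. (c p)\<^sup>2) = (\<Sum>p\<in>B'. (c p)\<^sup>2)"
    by (intro sum.mono_neutral_right) (auto simp: B'_def B)
  show ?thesis
  proof (cases "B' = {}")
    case True
    have l: "(\<lambda>\<omega>. \<Sum>p\<in>B'. c p * \<omega> p) = (\<lambda>_. 0)" using True by (simp only: sum.empty)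
    have r: "(\<lambda>x. sqrt (\<sigma>\<^sup>2 * (\<Sum>p\<in>B'. (c p)\<^sup>2)) * x) = (\<lambda>_. 0)" using True by (simp only: sum.empty mult_zero_right real_sqrt_zero mult_zero_left)
    have "distr ?M borel (\<lambda>_. 0::real) = return borel 0" by (rule P.distr_const) simp
    moreover have "distr ?Q borel (\<lambda>_. 0::real) = return borel 0" by (rule Q.distr_const) simp
    ultimately show ?thesis unfolding eq1 eq2 l r by (rule trans[OF _ sym])
  next
    case False
    then have In: "I \<noteq> {}" using sub by auto
    have ind0: "P.indep_vars (\<lambda>_. borel) (\<lambda>p \<omega>. \<omega> p) B'"
      by (rule P.indep_vars_subset[OF coord_indep[OF s In] sub])
    have ind: "P.indep_vars (\<lambda>_. borel) (\<lambda>p \<omega>. c p * \<omega> p) B'"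
      by (rule P.indep_vars_compose2[OF ind0]) simp
    have dist: "distributed ?M lborel (\<lambda>\<omega>. c p * \<omega> p) (normal_density 0 (\<bar>c p\<bar> * \<sigma>))" if "p \<in> B'" for p
    proof -
      have "c p \<noteq> 0" "p \<in> I" using that sub by (auto simp: B'_def)
      from P.normal_density_affine[OF coord_distr[OF s \<open>p \<in> I\<close>] s \<open>c p \<noteq> 0\<close>, of 0]
      show ?thesis by (simp only: add_0_left mult_zero_right)
    qed
    have pos: "0 < \<bar>c p\<bar> * \<sigma>" if "p \<in> B'" for p
      using that s by (auto simp: B'_def)
    have D: "distributed ?M lborel (\<lambda>\<omega>. \<Sum>p\<in>B'. c p * \<omega> p)
            (normal_density (\<Sum>p\<in>B'. 0) (sqrt (\<Sum>p\<in>B'. (\<bar>c p\<bar> * \<sigma>)\<^sup>2)))"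
      by (rule P.sum_indep_normal[OF fin False ind pos dist])
    have e: "(\<Sum>p\<in>B'. (\<bar>c p\<bar> * \<sigma>)\<^sup>2) = \<sigma>\<^sup>2 * (\<Sum>p\<in>B'. (c p)\<^sup>2)"
      by (simp add: sum_distrib_left power_mult_distrib mult.commute)
    have L: "distr ?M lborel (\<lambda>\<omega>. \<Sum>p\<in>B'. c p * \<omega> p)
         = density lborel (normal_density 0 (sqrt (\<sigma>\<^sup>2 * (\<Sum>p\<in>B'. (c p)\<^sup>2))))"
      using distributed_distr_eq_density[OF D] by (simp only: e sum.neutral_const)
    define v where "v = sqrt (\<sigma>\<^sup>2 * (\<Sum>p\<in>B'. (c p)\<^sup>2))"
    have "0 < (\<Sum>p\<in>B'. (c p)\<^sup>2)"
      using False fin by (intro sum_pos) (auto simp: B'_def)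
    then have vpos: "v > 0" using s by (simp add: v_def)
    then have vnz: "v \<noteq> 0" by simp
    have idd1: "distr ?Q lborel (\<lambda>x. x) = ?Q" by (rule distr_id2) simp
    have idd2: "(\<lambda>x. x) \<in> measurable ?Q lborel" by (rule measurable_ident_sets) simp
    have idd3: "(\<lambda>x. ennreal (std_normal_density x)) \<in> borel_measurable lborel" by measurable
    have idd: "distributed ?Q lborel (\<lambda>x. x) std_normal_density"
      unfolding distributed_def by (intro conjI idd1 idd2 idd3)
    have one: "(0::real) < 1" by simp
    from Q.normal_density_affine[OF idd one vnz, of 0]
    have "distributed ?Q lborel (\<lambda>x. v * x) (normal_density 0 v)"
      by (simp only: add_0_left mult_zero_right abs_of_pos[OF vpos] mult_1_right)
    then have R: "distr ?Q lborel (\<lambda>x. v * x) = density lborel (normal_density 0 v)"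
      by (rule distributed_distr_eq_density)
    have "distr ?M borel (\<lambda>\<omega>. \<Sum>p\<in>B'. c p * \<omega> p) = distr ?M lborel (\<lambda>\<omega>. \<Sum>p\<in>B'. c p * \<omega> p)"
      by (rule distr_cong[OF refl]) simp_all
    also have "\<dots> = distr ?Q lborel (\<lambda>x. v * x)" unfolding L R by (simp only: v_def)
    also have "\<dots> = distr ?Q borel (\<lambda>x. v * x)"
      by (rule distr_cong[OF refl]) simp_all
    finally show ?thesis unfolding eq1 eq2 v_def .
  qed
qed


lemma vec_meas: "(\<lambda>f. (\<chi> k. f k) :: real^'m::finite) \<in> borel_measurable (PiM (UNIV::'m set) (\<lambda>_. borel))"
proof (subst borel_measurable_euclidean_space, intro ballI)
  fix b :: "real^'m" assume "b \<in> Basis"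
  then obtain i u where b: "b = axis i u" by (auto simp: Basis_vec_def)
  have e: "(\<lambda>x. (\<chi> k. x k) \<bullet> b) = (\<lambda>x. x i * u)" by (simp add: b inner_axis)
  have "(\<lambda>x. x i) \<in> borel_measurable (PiM (UNIV::'m set) (\<lambda>_. borel))"
    by (rule measurable_component_singleton) simp
  then have "(\<lambda>x. x i * u) \<in> borel_measurable (PiM (UNIV::'m set) (\<lambda>_. borel))"
    by (rule borel_measurable_times[OF _ borel_measurable_const])
  then show "(\<lambda>x. (\<chi> k. x k) \<bullet> b) \<in> borel_measurable (PiM (UNIV::'m set) (\<lambda>_. borel))"
    unfolding e .
qed

lemma (in prob_space) indep_vec_law:
  fixes Y :: "'m::finite \<Rightarrow> 'a \<Rightarrow> real"
  assumes ind: "indep_vars (\<lambda>_. borel) Y UNIV" and law: "\<And>k. distr M borel (Y k) = L"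
  shows "distr M borel (\<lambda>\<omega>. (\<chi> k. Y k \<omega>)) = distr (PiM (UNIV::'m set) (\<lambda>_. L)) borel (\<lambda>f. \<chi> k. f k)"
proof -
  have rv: "\<And>k. random_variable borel (Y k)" using ind unfolding indep_vars_def by blast
  have eq: "distr M (PiM UNIV (\<lambda>_. borel)) (\<lambda>x. \<lambda>i\<in>UNIV. Y i x) = PiM UNIV (\<lambda>i. distr M borel (Y i))"
    by (rule indep_vars_iff_distr_eq_PiM[THEN iffD1, OF UNIV_not_empty rv ind])
  have m1: "(\<lambda>x. \<lambda>i\<in>UNIV. Y i x) \<in> measurable M (PiM UNIV (\<lambda>_. borel))"
    by (rule measurable_restrict) (rule rv)
  have "distr M borel (\<lambda>\<omega>. \<chi> k. Y k \<omega>) = distr M borel ((\<lambda>f. \<chi> k. f k) \<circ> (\<lambda>x. \<lambda>i\<in>UNIV. Y i x))"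
    by (simp add: comp_def restrict_def)
  also have "\<dots> = distr (distr M (PiM UNIV (\<lambda>_. borel)) (\<lambda>x. \<lambda>i\<in>UNIV. Y i x)) borel (\<lambda>f. \<chi> k. f k)"
    by (rule distr_distr[symmetric, OF vec_meas m1])
  also have "\<dots> = distr (PiM UNIV (\<lambda>_. L)) borel (\<lambda>f. \<chi> k. f k)" unfolding eq law ..
  finally show ?thesis .
qed

lemma vec_law:
  fixes \<sigma> :: real and a :: "'s \<Rightarrow> bool \<Rightarrow> real" and J T :: "'s set"
  assumes s: "\<sigma> > 0" and J: "finite J" "J \<subseteq> T"
  shows "distr (PiM (T \<times> (UNIV::'m::finite set) \<times> (UNIV::bool set)) (\<lambda>_. density lborel (normal_density 0 \<sigma>))) borel
      (\<lambda>\<omega>. (\<chi> k. \<Sum>s\<in>J. a s True * \<omega> (s,k,True) + a s False * \<omega> (s,k,False)) :: real^'m)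
      = gauss_vec (\<sigma>\<^sup>2 * (\<Sum>s\<in>J. (a s True)\<^sup>2 + (a s False)\<^sup>2))"
proof -
  let ?I = "T \<times> (UNIV::'m set) \<times> (UNIV::bool set)"
  let ?M = "PiM ?I (\<lambda>_. density lborel (normal_density 0 \<sigma>))"
  let ?Q = "density lborel std_normal_density"
  let ?G = "PiM (UNIV::'m set) (\<lambda>_. ?Q)"
  interpret P: prob_space ?M
    by (intro prob_space_PiM prob_space_normal_density s)
  interpret G: prob_space ?G
    by (intro prob_space_PiM prob_space_normal_density) simp
  define v where "v = \<sigma>\<^sup>2 * (\<Sum>s\<in>J. (a s True)\<^sup>2 + (a s False)\<^sup>2)"
  show ?thesis
  proof (cases "J = {}")
    case True
    have l: "(\<lambda>\<omega>::'s \<times> 'm \<times> bool \<Rightarrow> real. (\<chi> k. \<Sum>s\<in>J. a s True * \<omega> (s,k,True) + a s False * \<omega> (s,k,False)) :: real^'m) = (\<lambda>_. 0)"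
      using True by (simp add: zero_vec_def)
    have r: "(\<lambda>g::'m \<Rightarrow> real. (\<chi> k. sqrt (\<sigma>\<^sup>2 * (\<Sum>s\<in>J. (a s True)\<^sup>2 + (a s False)\<^sup>2)) * g k) :: real^'m) = (\<lambda>_. 0)"
      using True by (simp add: zero_vec_def)
    have "distr ?M borel (\<lambda>_. 0::real^'m) = return borel 0" by (rule P.distr_const) simp
    moreover have "distr ?G borel (\<lambda>_. 0::real^'m) = return borel 0" by (rule G.distr_const) simp
    ultimately show ?thesis unfolding gauss_vec_def l r by (rule trans[OF _ sym])
  next
    case False
    then have In: "?I \<noteq> {}" using J by auto
    define B where "B k = J \<times> {k} \<times> (UNIV::bool set)" for k::'m
    define c where "c p = a (fst p) (snd (snd p))" for p :: "'s \<times> 'm \<times> bool"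
    define Y where "Y = (\<lambda>k \<omega>. \<Sum>p\<in>B k. c p * \<omega> p)"
    have sumB: "(\<Sum>p\<in>B k. g p) = (\<Sum>s\<in>J. g (s,k,True) + g (s,k,False))" for k and g :: "'s\<times>'m\<times>bool \<Rightarrow> real"
      by (simp add: B_def sum.cartesian_product' UNIV_bool add.commute)
    have finB: "finite (B k)" for k using J by (simp add: B_def)
    have subB: "B k \<subseteq> ?I" for k using J by (auto simp: B_def)
    have disj: "disjoint_family_on B UNIV" by (auto simp: disjoint_family_on_def B_def)
    have lawY: "distr ?M borel (Y k) = distr ?Q borel (\<lambda>x. sqrt v * x)" for k
    proof -
      have "(\<Sum>p\<in>B k. (c p)\<^sup>2) = (\<Sum>s\<in>J. (a s True)\<^sup>2 + (a s False)\<^sup>2)"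
        by (simp add: sumB c_def)
      then show ?thesis using lin_comb_law[OF s finB subB, of c] by (simp add: Y_def v_def)
    qed
    have meas: "(\<lambda>f. \<Sum>p\<in>B k. c p * f p) \<in> borel_measurable (PiM (B k) (\<lambda>_. borel))" for k
    proof (rule borel_measurable_sum)
      fix p assume "p \<in> B k"
      then have "(\<lambda>f. f p) \<in> borel_measurable (PiM (B k) (\<lambda>_. borel))"
        by (rule measurable_component_singleton)
      then show "(\<lambda>f. c p * f p) \<in> borel_measurable (PiM (B k) (\<lambda>_. borel))"
        by (rule borel_measurable_times[OF borel_measurable_const])
    qed
    have ind1: "P.indep_vars (\<lambda>k. PiM (B k) (\<lambda>_. borel)) (\<lambda>k \<omega>. restrict (\<lambda>p. \<omega> p) (B k)) UNIV"
      by (rule P.indep_vars_restrict[OF coord_indep[OF s In] subB disj])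
    have ind2: "P.indep_vars (\<lambda>_. borel) (\<lambda>k \<omega>. (\<lambda>f. \<Sum>p\<in>B k. c p * f p) (restrict (\<lambda>p. \<omega> p) (B k))) UNIV"
      by (rule P.indep_vars_compose2[OF ind1 meas])
    have eqY: "(\<lambda>k \<omega>. (\<lambda>f. \<Sum>p\<in>B k. c p * f p) (restrict (\<lambda>p. \<omega> p) (B k))) = Y"
      unfolding Y_def by (intro ext sum.cong refl) simp
    have indY: "P.indep_vars (\<lambda>_. borel) Y UNIV" using ind2 unfolding eqY .
    have "distr ?M borel (\<lambda>\<omega>. (\<chi> k. Y k \<omega>) :: real^'m) = distr (PiM (UNIV::'m set) (\<lambda>_. distr ?Q borel (\<lambda>x. sqrt v * x))) borel (\<lambda>f. \<chi> k. f k)"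
      by (rule P.indep_vec_law[OF indY lawY])
    moreover have "(\<lambda>\<omega>. (\<chi> k. \<Sum>s\<in>J. a s True * \<omega> (s,k,True) + a s False * \<omega> (s,k,False)) :: real^'m) = (\<lambda>\<omega>. (\<chi> k. Y k \<omega>))"
      by (simp add: Y_def sumB c_def)
    moreover have "gauss_vec v = distr (PiM (UNIV::'m set) (\<lambda>_. distr ?Q borel (\<lambda>x. sqrt v * x))) borel (\<lambda>f. (\<chi> k. f k) :: real^'m)"
    proof -
      have one: "(0::real) < 1" by simp
      have c0: "G.indep_vars (\<lambda>_. borel) (\<lambda>k g. g k) UNIV"
        by (rule coord_indep[OF one UNIV_not_empty])
      have c1: "G.indep_vars (\<lambda>_. borel) (\<lambda>k g. sqrt v * g k) UNIV"
        by (rule G.indep_vars_compose2[OF c0]) simp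
      have c2: "distr ?G borel (\<lambda>g. sqrt v * g k) = distr ?Q borel (\<lambda>x. sqrt v * x)" for k
      proof -
        have m: "(\<lambda>g. g k) \<in> measurable ?G ?Q" by (rule measurable_component_singleton) simp
        have "distr ?G borel (\<lambda>g. sqrt v * g k) = distr ?G borel ((\<lambda>x. sqrt v * x) \<circ> (\<lambda>g. g k))"
          by (simp add: comp_def)
        also have "\<dots> = distr (distr ?G ?Q (\<lambda>g. g k)) borel (\<lambda>x. sqrt v * x)"
          by (rule distr_distr[symmetric, OF _ m]) simp
        also have "distr ?G ?Q (\<lambda>g. g k) = ?Q"
          by (rule distr_PiM_component) (simp_all add: prob_space_normal_density)
        finally show ?thesis .
      qed
      show ?thesis unfolding gauss_vec_def by (rule G.indep_vec_law[OF c1 c2])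
    qed
    ultimately show ?thesis unfolding v_def by simp
  qed
qed


lemma decomp_lin: "linear (decomp S t)"
proof -
  have "decomp S t = (\<lambda>x. ((mm S / dd S) *\<^sub>R transpose (Amat S t)) *v x)"
    unfolding decomp_def by (intro ext) (rule scaleR_matrix_vector_assoc)
  then show ?thesis by simp
qed

lemma air_expand:
  fixes S :: "('v::finite,'d::finite,'m::finite) lsys"
  assumes g: "gam S t u i s > 0" and h: "\<And>j. j \<in> NA S i s \<Longrightarrow> hc S t j i \<noteq> 0"
  shows "yhat_air S t u i s = (\<Sum>j\<in>NA S i s. Wt S i j *\<^sub>R decomp S t (Amat S t *v u j))
          + decomp S t (Re_vec (complex_of_real (1 / sqrt (gam S t u i s)) *s noise S t s i))"
proof -
  let ?g = "gam S t u i s"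
  have sg: "sqrt ?g \<noteq> 0" using g by simp
  have e: "(hc S t j i *s x_air S t u j i s) $ k = complex_of_real (sqrt ?g * (Wt S i j * (Amat S t *v u j) $ k))"
    if "j \<in> NA S i s" for j k
    using h[OF that] by (simp add: x_air_def cvec_def field_simps)
  have yk: "y_air S t u i s $ k = complex_of_real (sqrt ?g * (\<Sum>j\<in>NA S i s. Wt S i j * (Amat S t *v u j) $ k)) + noise S t s i $ k" for k
  proof -
    have "y_air S t u i s $ k = (\<Sum>j\<in>NA S i s. (hc S t j i *s x_air S t u j i s) $ k) + noise S t s i $ k"
      by (simp add: y_air_def)
    also have "\<dots> = (\<Sum>j\<in>NA S i s. complex_of_real (sqrt ?g * (Wt S i j * (Amat S t *v u j) $ k))) + noise S t s i $ k"
      using e by (simp cong: sum.cong)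
    also have "\<dots> = complex_of_real (sqrt ?g * (\<Sum>j\<in>NA S i s. Wt S i j * (Amat S t *v u j) $ k)) + noise S t s i $ k"
      by (simp add: sum_distrib_left)
    finally show ?thesis .
  qed
  have R: "Re_vec (complex_of_real (1 / sqrt ?g) *s y_air S t u i s)
      = (\<Sum>j\<in>NA S i s. Wt S i j *\<^sub>R (Amat S t *v u j)) + Re_vec (complex_of_real (1 / sqrt ?g) *s noise S t s i)"
    using sg by (simp add: vec_eq_iff Re_vec_def yk distrib_left)
  show ?thesis unfolding yhat_air_def R linear_add[OF decomp_lin] linear_sum[OF decomp_lin] linear_scale[OF decomp_lin] ..
qed

lemma bc_expand:
  fixes S :: "('v::finite,'d::finite,'m::finite) lsys"
  assumes a: "alp S t u j > 0" and h: "hc S t j i \<noteq> 0"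
  shows "yhat_bc S t u j i s = Wt S i j *\<^sub>R decomp S t (Amat S t *v u j)
      + Wt S i j *\<^sub>R decomp S t (Re_vec ((1 / (complex_of_real (sqrt (alp S t u j)) * hc S t j i)) *s noise S t s i))"
proof -
  let ?c = "1 / (complex_of_real (sqrt (alp S t u j)) * hc S t j i)"
  have sa: "complex_of_real (sqrt (alp S t u j)) \<noteq> 0" using a by simp
  have e: "?c * (hc S t j i * (complex_of_real (sqrt (alp S t u j)) * complex_of_real z)) = complex_of_real z" for z
    using sa h by (simp add: field_simps)
  have yk: "(?c *s y_bc S t u j i s) $ k = complex_of_real ((Amat S t *v u j) $ k) + ?c * noise S t s i $ k" for k
  proof -
    have "(?c *s y_bc S t u j i s) $ k = ?c * (hc S t j i * (complex_of_real (sqrt (alp S t u j)) * complex_of_real ((Amat S t *v u j) $ k)) + noise S t s i $ k)"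
      by (simp only: y_bc_def x_bc_def cvec_def vector_smult_component vector_add_component vec_lambda_beta)
    also have "\<dots> = complex_of_real ((Amat S t *v u j) $ k) + ?c * noise S t s i $ k"
      by (simp only: distrib_left e)
    finally show ?thesis .
  qed
  have R: "Re_vec (?c *s y_bc S t u j i s) = (Amat S t *v u j) + Re_vec (?c *s noise S t s i)"
    by (simp only: vec_eq_iff Re_vec_def vec_lambda_beta yk vector_add_component plus_complex.sel Re_complex_of_real) simp
  show ?thesis unfolding yhat_bc_def R linear_add[OF decomp_lin] scaleR_add_right ..
qed

lemma sched_facts:
  fixes S :: "('v::finite,'d::finite,'m::finite) lsys"
  assumes sched: "schedule_ok S"
  shows "SAR S i \<subseteq> {1..Mslots S}" "SBR S i \<subseteq> {1..Mslots S}" "SAT S i \<subseteq> {1..Mslots S}" "SBT S i \<subseteq> {1..Mslots S}"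
    and "SAR S i \<inter> SBR S i = {}"
    and "s \<in> SAR S i \<Longrightarrow> NA S i s \<noteq> {}" "s \<in> SAR S i \<Longrightarrow> NA S i s \<subseteq> Nb S i"
    and "s \<in> SAR S i \<Longrightarrow> j \<in> NA S i s \<Longrightarrow> s \<in> SAT S j"
    and "s \<in> SBR S i \<Longrightarrow> src S i s \<in> Nb S i" "s \<in> SBR S i \<Longrightarrow> s \<in> SBT S (src S i s)"
    and "\<forall>s\<in>SAR S i. \<forall>s'\<in>SAR S i. s \<noteq> s' \<longrightarrow> NA S i s \<inter> NA S i s' = {}"
    and "inj_on (src S i) (SBR S i)"
    and "s \<in> SAR S i \<Longrightarrow> s' \<in> SBR S i \<Longrightarrow> src S i s' \<notin> NA S i s"
    and "Nb S i = (\<Union>s\<in>SAR S i. NA S i s) \<union> src S i ` SBR S i"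
proof -
  have A: "\<forall>i. SAT S i \<union> SAR S i \<subseteq> {s. odd s \<and> 1 \<le> s \<and> s \<le> Mslots S}
        \<and> SBT S i \<union> SBR S i \<subseteq> {s. even s \<and> 1 \<le> s \<and> s \<le> Mslots S}
        \<and> SAT S i \<inter> SAR S i = {} \<and> SBT S i \<inter> SBR S i = {}"
    using sched unfolding schedule_ok_def by (elim conjE)
  have B: "\<forall>j. \<forall>s\<in>SAR S j. NA S j s \<noteq> {} \<and> NA S j s \<subseteq> Nb S j \<and> (\<forall>i\<in>NA S j s. s \<in> SAT S i)"
    using sched unfolding schedule_ok_def by (elim conjE)
  have C: "\<forall>j. \<forall>s\<in>SBR S j. src S j s \<in> Nb S j \<and> s \<in> SBT S (src S j s)"
    using sched unfolding schedule_ok_def by (elim conjE)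
  have D: "\<forall>j. \<forall>s\<in>SAR S j. \<forall>s'\<in>SAR S j. s \<noteq> s' \<longrightarrow> NA S j s \<inter> NA S j s' = {}"
    using sched unfolding schedule_ok_def by (elim conjE)
  have E: "\<forall>j. \<forall>s\<in>SBR S j. \<forall>s'\<in>SBR S j. s \<noteq> s' \<longrightarrow> src S j s \<noteq> src S j s'"
    using sched unfolding schedule_ok_def by (elim conjE)
  have F: "\<forall>j. \<forall>s\<in>SAR S j. \<forall>s'\<in>SBR S j. src S j s' \<notin> NA S j s"
    using sched unfolding schedule_ok_def by (elim conjE)
  have G: "\<forall>j. Nb S j = (\<Union>s\<in>SAR S j. NA S j s) \<union> src S j ` SBR S j"
    using sched unfolding schedule_ok_def by (elim conjE)
  have A1: "SAT S i \<union> SAR S i \<subseteq> {s. odd s \<and> 1 \<le> s \<and> s \<le> Mslots S}" using A by blast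
  have A2: "SBT S i \<union> SBR S i \<subseteq> {s. even s \<and> 1 \<le> s \<and> s \<le> Mslots S}" using A by blast
  show "SAR S i \<subseteq> {1..Mslots S}" using A1 by auto
  show "SBR S i \<subseteq> {1..Mslots S}" using A2 by auto
  show "SAT S i \<subseteq> {1..Mslots S}" using A1 by auto
  show "SBT S i \<subseteq> {1..Mslots S}" using A2 by auto
  show "SAR S i \<inter> SBR S i = {}" using A1 A2 by blast
  show "s \<in> SAR S i \<Longrightarrow> NA S i s \<noteq> {}" using B by blast
  show "s \<in> SAR S i \<Longrightarrow> NA S i s \<subseteq> Nb S i" using B by blast
  show "s \<in> SAR S i \<Longrightarrow> j \<in> NA S i s \<Longrightarrow> s \<in> SAT S j" using B by blast
  show "s \<in> SBR S i \<Longrightarrow> src S i s \<in> Nb S i" using C by blast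
  show "s \<in> SBR S i \<Longrightarrow> s \<in> SBT S (src S i s)" using C by blast
  show "\<forall>s\<in>SAR S i. \<forall>s'\<in>SAR S i. s \<noteq> s' \<longrightarrow> NA S i s \<inter> NA S i s' = {}" using D by blast
  show "inj_on (src S i) (SBR S i)" using E unfolding inj_on_def by blast
  show "s \<in> SAR S i \<Longrightarrow> s' \<in> SBR S i \<Longrightarrow> src S i s' \<notin> NA S i s" using F by blast
  show "Nb S i = (\<Union>s\<in>SAR S i. NA S i s) \<union> src S i ` SBR S i" using G by blast
qed

lemma finTx: "schedule_ok S \<Longrightarrow> finite (Tx S j)"
  using sched_facts(3,4)[of S j] unfolding Tx_def by (meson finite_Un finite_atLeastAtMost finite_subset)

lemma cardTx: "schedule_ok S \<Longrightarrow> s \<in> SAT S j \<or> s \<in> SBT S j \<Longrightarrow> real (card (Tx S j)) > 0"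
  using finTx[of S j] unfolding Tx_def by (auto simp: card_gt_0_iff)

lemma Nuse_pos: "schedule_ok S \<Longrightarrow> s \<in> SAR S i \<or> s \<in> SBR S i \<Longrightarrow> Nuse S > 0"
  using sched_facts(1,2)[of S i] unfolding Nuse_def by (auto simp: subset_iff)

lemma gam_pos:
  fixes S :: "('v::finite,'d::finite,'m::finite) lsys"
  assumes sched: "schedule_ok S" and chan: "channel_ok S" and par: "params_ok S"
    and wd_w: "\<And>j s i. s \<in> SAR S j \<Longrightarrow> i \<in> NA S j s \<Longrightarrow> Wt S j i \<noteq> 0"
    and u: "\<And>j. u j \<noteq> 0" and s: "s \<in> SAR S i"
  shows "gam S t u i s > 0"
proof -
  have fin: "finite (NA S i s)" by simp
  have ne: "NA S i s \<noteq> {}" using sched_facts(6)[OF sched s] .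
  have "\<forall>a\<in>(\<lambda>j. Nuse S * Pw S t * (cmod (hc S t j i))\<^sup>2 /
        (real (card (Tx S j)) * (Wt S i j)\<^sup>2 * (norm (u j))\<^sup>2)) ` NA S i s. 0 < a"
  proof
    fix a assume "a \<in> (\<lambda>j. Nuse S * Pw S t * (cmod (hc S t j i))\<^sup>2 /
        (real (card (Tx S j)) * (Wt S i j)\<^sup>2 * (norm (u j))\<^sup>2)) ` NA S i s"
    then obtain j where j: "j \<in> NA S i s" and a: "a = Nuse S * Pw S t * (cmod (hc S t j i))\<^sup>2 /
        (real (card (Tx S j)) * (Wt S i j)\<^sup>2 * (norm (u j))\<^sup>2)" by blast
    have jn: "j \<in> Nb S i" using sched_facts(7)[OF sched s] j by blast
    have "hc S t i j \<noteq> 0 \<and> hc S t i j = hc S t j i" using chan jn unfolding channel_ok_def by blast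
    then have h: "hc S t j i \<noteq> 0" by metis
    have c: "real (card (Tx S j)) > 0" using cardTx[OF sched] sched_facts(8)[OF sched s j] by blast
    have w: "Wt S i j \<noteq> 0" using wd_w[OF s j] .
    have N: "Nuse S > 0" using Nuse_pos[OF sched] s by blast
    have P: "Pw S t > 0" using par unfolding params_ok_def by blast
    show "0 < a" unfolding a using h c w N P u[of j] by (simp add: zero_less_mult_iff)
  qed
  then show ?thesis unfolding gam_def using Min_gr_iff[OF finite_imageI[OF fin]] ne by simp
qed

lemma alp_pos:
  assumes sched: "schedule_ok S" and par: "params_ok S" and u: "u j \<noteq> 0"
    and s: "s \<in> SBT S j" and N: "Nuse S > 0"
  shows "alp S t u j > 0"
proof -
  have c: "real (card (Tx S j)) > 0" using cardTx[OF sched] s by blast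
  have P: "Pw S t > 0" using par unfolding params_ok_def by blast
  show ?thesis unfolding alp_def using c P N u by simp
qed

lemma partition_sum:
  fixes S :: "('v::finite,'d::finite,'m::finite) lsys" and g :: "'v \<Rightarrow> 'a::comm_monoid_add"
  assumes sched: "schedule_ok S"
  shows "(\<Sum>j\<in>Nb S i. g j) = (\<Sum>s\<in>SAR S i. \<Sum>j\<in>NA S i s. g j) + (\<Sum>s\<in>SBR S i. g (src S i s))"
proof -
  have fA: "finite (SAR S i)" using sched_facts(1)[OF sched] finite_subset by blast
  have fB: "finite (SBR S i)" using sched_facts(2)[OF sched] finite_subset by blast
  have d: "(\<Union>s\<in>SAR S i. NA S i s) \<inter> src S i ` SBR S i = {}"
    using sched_facts(13)[OF sched] by blast
  have "(\<Sum>j\<in>Nb S i. g j) = (\<Sum>j\<in>(\<Union>s\<in>SAR S i. NA S i s). g j) + (\<Sum>j\<in>src S i ` SBR S i. g j)"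
    unfolding sched_facts(14)[OF sched] by (rule sum.union_disjoint) (simp_all add: d)
  also have "(\<Sum>j\<in>(\<Union>s\<in>SAR S i. NA S i s). g j) = (\<Sum>s\<in>SAR S i. \<Sum>j\<in>NA S i s. g j)"
    by (rule sum.UNION_disjoint[OF fA _ sched_facts(11)[OF sched]]) simp
  also have "(\<Sum>j\<in>src S i ` SBR S i. g j) = (\<Sum>s\<in>SBR S i. g (src S i s))"
    by (simp add: sum.reindex[OF sched_facts(12)[OF sched]])
  finally show ?thesis .
qed

lemma incr:
  fixes S :: "('v::finite,'d::finite,'m::finite) lsys"
  assumes sched: "schedule_ok S" and chan: "channel_ok S" and par: "params_ok S"
    and wd_u: "\<And>t j. uvec S t j \<noteq> 0"
    and wd_w: "\<And>j s i. s \<in> SAR S j \<Longrightarrow> i \<in> NA S j s \<Longrightarrow> Wt S j i \<noteq> 0"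
  shows "(\<Sum>s\<in>SAR S i. yhat_air S t (uvec S t) i s) + (\<Sum>s\<in>SBR S i. yhat_bc S t (uvec S t) (src S i s) i s)
       = (\<Sum>j\<in>Nb S i. Wt S i j *\<^sub>R decomp S t (Amat S t *v uvec S t j))
         + decomp S t (eff_noise S t (uvec S t) i (\<lambda>s. noise S t s i))"
proof -
  let ?U = "uvec S t"
  let ?D = "\<lambda>j. decomp S t (Amat S t *v ?U j)"
  let ?NA = "\<lambda>s. decomp S t (Re_vec (complex_of_real (1 / sqrt (gam S t ?U i s)) *s noise S t s i))"
  let ?NB = "\<lambda>s. Wt S i (src S i s) *\<^sub>R decomp S t (Re_vec ((1 / (complex_of_real (sqrt (alp S t ?U (src S i s))) * hc S t (src S i s) i)) *s noise S t s i))"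
  have hsym: "hc S t j i \<noteq> 0" if "j \<in> Nb S i" for j
  proof -
    have "hc S t i j \<noteq> 0 \<and> hc S t i j = hc S t j i" using chan that unfolding channel_ok_def by blast
    then show ?thesis by metis
  qed
  have A: "yhat_air S t ?U i s = (\<Sum>j\<in>NA S i s. Wt S i j *\<^sub>R ?D j) + ?NA s" if s: "s \<in> SAR S i" for s
  proof (rule air_expand)
    show "gam S t ?U i s > 0" by (rule gam_pos[OF sched chan par wd_w wd_u s])
    show "hc S t j i \<noteq> 0" if "j \<in> NA S i s" for j
      using hsym sched_facts(7)[OF sched s] that by blast
  qed
  have B: "yhat_bc S t ?U (src S i s) i s = Wt S i (src S i s) *\<^sub>R ?D (src S i s) + ?NB s" if s: "s \<in> SBR S i" for s
  proof (rule bc_expand)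
    have N: "Nuse S > 0" using Nuse_pos[OF sched] s by blast
    show "alp S t ?U (src S i s) > 0" by (rule alp_pos[OF sched par wd_u sched_facts(10)[OF sched s] N])
    show "hc S t (src S i s) i \<noteq> 0" by (rule hsym[OF sched_facts(9)[OF sched s]])
  qed
  have "(\<Sum>s\<in>SAR S i. yhat_air S t ?U i s) + (\<Sum>s\<in>SBR S i. yhat_bc S t ?U (src S i s) i s)
      = (\<Sum>s\<in>SAR S i. (\<Sum>j\<in>NA S i s. Wt S i j *\<^sub>R ?D j) + ?NA s) + (\<Sum>s\<in>SBR S i. Wt S i (src S i s) *\<^sub>R ?D (src S i s) + ?NB s)"
    using A B by (simp cong: sum.cong)
  also have "\<dots> = ((\<Sum>s\<in>SAR S i. \<Sum>j\<in>NA S i s. Wt S i j *\<^sub>R ?D j) + (\<Sum>s\<in>SBR S i. Wt S i (src S i s) *\<^sub>R ?D (src S i s)))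
       + ((\<Sum>s\<in>SAR S i. ?NA s) + (\<Sum>s\<in>SBR S i. ?NB s))"
    by (simp only: sum.distrib add_ac)
  also have "(\<Sum>s\<in>SAR S i. \<Sum>j\<in>NA S i s. Wt S i j *\<^sub>R ?D j) + (\<Sum>s\<in>SBR S i. Wt S i (src S i s) *\<^sub>R ?D (src S i s))
      = (\<Sum>j\<in>Nb S i. Wt S i j *\<^sub>R ?D j)"
    by (rule partition_sum[OF sched, symmetric])
  also have "(\<Sum>s\<in>SAR S i. ?NA s) + (\<Sum>s\<in>SBR S i. ?NB s) = decomp S t (eff_noise S t ?U i (\<lambda>s. noise S t s i))"
    unfolding eff_noise_def linear_add[OF decomp_lin] linear_sum[OF decomp_lin] linear_scale[OF decomp_lin] ..
  finally show ?thesis .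
qed

lemma part1:
  fixes S :: "('v::finite,'d::finite,'m::finite) lsys"
  assumes graph: "conn_graph (Nb S)" and mixing: "mixing_ok (Nb S) (Wt S)"
    and sched: "schedule_ok S" and chan: "channel_ok S" and par: "params_ok S"
    and wd_u: "\<And>t j. uvec S t j \<noteq> 0"
    and wd_w: "\<And>j s i. s \<in> SAR S j \<Longrightarrow> i \<in> NA S j s \<Longrightarrow> Wt S j i \<noteq> 0"
  shows "theta S (Suc t) i =
            theta_half S t i
            + zeta S t *\<^sub>R (\<Sum>j\<in>Nb S i \<union> {i}. Wt S i j *\<^sub>R (theta_hat S (Suc t) j - theta_hat S (Suc t) i))
            + zeta S t *\<^sub>R (\<Sum>\<tau>\<le>t. decomp S \<tau> (eff_noise S \<tau> (uvec S \<tau>) i (\<lambda>s. noise S \<tau> s i)))"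
proof -
  define yh where "yh t = snd (snd (run S t))" for t
  define Nz where "Nz \<tau> = decomp S \<tau> (eff_noise S \<tau> (uvec S \<tau>) i (\<lambda>s. noise S \<tau> s i))" for \<tau>
  have thS: "theta_hat S (Suc t) j = theta_hat S t j + decomp S t (Amat S t *v uvec S t j)" for t j
    by (simp add: theta_hat_def uvec_def step_def Let_def)
  have yhS: "yh (Suc t) j = yh t j + (\<Sum>s\<in>SAR S j. yhat_air S t (uvec S t) j s) + (\<Sum>s\<in>SBR S j. yhat_bc S t (uvec S t) (src S j s) j s)" for t j
    by (simp add: yh_def uvec_def step_def Let_def)
  have thetaS: "theta S (Suc t) j = theta_half S t j + zeta S t *\<^sub>R (Wt S j j *\<^sub>R theta_hat S (Suc t) j + yh (Suc t) j - theta_hat S (Suc t) j)" for t j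
    by (simp add: theta_def theta_hat_def theta_half_def yh_def uvec_def step_def Let_def)
  have inv: "yh t i = (\<Sum>j\<in>Nb S i. Wt S i j *\<^sub>R theta_hat S t j) + (\<Sum>\<tau><t. Nz \<tau>)" for t
  proof (induction t)
    case 0
    show ?case by (simp add: yh_def theta_hat_def)
  next
    case (Suc t)
    have "yh (Suc t) i = yh t i + ((\<Sum>j\<in>Nb S i. Wt S i j *\<^sub>R decomp S t (Amat S t *v uvec S t j)) + Nz t)"
      by (simp only: yhS add.assoc incr[OF sched chan par wd_u wd_w] Nz_def)
    also have "\<dots> = (\<Sum>j\<in>Nb S i. Wt S i j *\<^sub>R theta_hat S (Suc t) j) + (\<Sum>\<tau><Suc t. Nz \<tau>)"
      unfolding Suc thS scaleR_add_right sum.distrib sum.lessThan_Suc by (simp only: add_ac)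
    finally show ?case .
  qed
  have niN: "i \<notin> Nb S i" using graph unfolding conn_graph_def by blast
  have finN: "finite (Nb S i)" by simp
  have W0: "Wt S i j = 0" if "j \<notin> insert i (Nb S i)" for j
    using mixing that unfolding mixing_ok_def by blast
  have rowsum: "(\<Sum>j\<in>UNIV. Wt S i j) = 1" using mixing unfolding mixing_ok_def by blast
  have "(\<Sum>j\<in>UNIV. Wt S i j) = (\<Sum>j\<in>insert i (Nb S i). Wt S i j)"
    by (rule sum.mono_neutral_right) (use W0 in auto)
  then have sumW: "Wt S i i + (\<Sum>j\<in>Nb S i. Wt S i j) = 1"
    using rowsum niN finN by simp
  let ?th = "theta_hat S (Suc t)"
  have "(\<Sum>j\<in>Nb S i \<union> {i}. Wt S i j *\<^sub>R (?th j - ?th i))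
      = (\<Sum>j\<in>Nb S i. Wt S i j *\<^sub>R ?th j) - (\<Sum>j\<in>Nb S i. Wt S i j) *\<^sub>R ?th i"
    using niN finN by (simp add: scaleR_diff_right sum_subtractf scaleR_sum_left)
  also have "\<dots> = (\<Sum>j\<in>Nb S i. Wt S i j *\<^sub>R ?th j) + Wt S i i *\<^sub>R ?th i - ?th i"
  proof -
    have e0: "(\<Sum>j\<in>Nb S i. Wt S i j) = 1 - Wt S i i" using sumW by simp
    have e1: "(\<Sum>j\<in>Nb S i. Wt S i j) *\<^sub>R ?th i = ?th i - Wt S i i *\<^sub>R ?th i"
      unfolding e0 by (simp only: scaleR_diff_left scaleR_one)
    show ?thesis unfolding e1 by (simp add: algebra_simps)
  qed
  finally have X: "(\<Sum>j\<in>Nb S i \<union> {i}. Wt S i j *\<^sub>R (?th j - ?th i))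
      = (\<Sum>j\<in>Nb S i. Wt S i j *\<^sub>R ?th j) + Wt S i i *\<^sub>R ?th i - ?th i" .
  have "theta S (Suc t) i = theta_half S t i + zeta S t *\<^sub>R (Wt S i i *\<^sub>R ?th i + ((\<Sum>j\<in>Nb S i. Wt S i j *\<^sub>R ?th j) + (\<Sum>\<tau><Suc t. Nz \<tau>)) - ?th i)"
    unfolding thetaS inv ..
  also have "\<dots> = theta_half S t i + zeta S t *\<^sub>R ((\<Sum>j\<in>Nb S i. Wt S i j *\<^sub>R ?th j) + Wt S i i *\<^sub>R ?th i - ?th i) + zeta S t *\<^sub>R (\<Sum>\<tau>\<le>t. Nz \<tau>)"
    by (simp only: lessThan_Suc_atMost scaleR_add_right[symmetric] add.assoc) (simp add: algebra_simps)
  finally show ?thesis unfolding X[symmetric] Nz_def .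
qed

lemma Min_recip:
  fixes g :: "'a \<Rightarrow> real"
  assumes fin: "finite A" and ne: "A \<noteq> {}" and pos: "\<And>j. j \<in> A \<Longrightarrow> g j > 0" and c: "c > 0"
  shows "Min ((\<lambda>j. c / g j) ` A) = c / Max (g ` A)"
proof (rule Min_eqI)
  show "finite ((\<lambda>j. c / g j) ` A)" using fin by simp
  have "Max (g ` A) \<in> g ` A" using fin ne by simp
  then obtain j0 where j0: "j0 \<in> A" "Max (g ` A) = g j0" by blast
  show "c / Max (g ` A) \<in> (\<lambda>j. c / g j) ` A" unfolding j0(2) by (rule imageI[OF j0(1)])
  fix y assume "y \<in> (\<lambda>j. c / g j) ` A"
  then obtain j where j: "j \<in> A" "y = c / g j" by blast
  have le: "g j \<le> Max (g ` A)" using fin j by simp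
  have "0 < Max (g ` A) * g j" using pos j j0 by simp
  then show "c / Max (g ` A) \<le> y" unfolding j(2) using le c by (intro divide_left_mono) simp_all
qed

lemma part2:
  fixes S :: "('v::finite,'d::finite,'m::finite) lsys" and u :: "'v \<Rightarrow> real^'d"
  assumes sched: "schedule_ok S" and chan: "channel_ok S" and par: "params_ok S"
    and wd_w: "\<And>j s i. s \<in> SAR S j \<Longrightarrow> i \<in> NA S j s \<Longrightarrow> Wt S j i \<noteq> 0"
    and u: "\<And>j. u j \<noteq> 0"
  shows "distr (noise_space S) borel (\<lambda>\<omega>. eff_noise S t u i (noise_of \<omega>)) = gauss_vec (Ntil S t u i)"
proof -
  define g where "g s = gam S t u i s" for s
  define cc where "cc s = 1 / (complex_of_real (sqrt (alp S t u (src S i s))) * hc S t (src S i s) i)" for s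
  define a where "a s b = (if s \<in> SAR S i then (if b then 1 / sqrt (g s) else 0)
      else (if b then Wt S i (src S i s) * Re (cc s) else - (Wt S i (src S i s) * Im (cc s))))" for s b
  define J where "J = SAR S i \<union> SBR S i"
  have fA: "finite (SAR S i)" using sched_facts(1)[OF sched] finite_subset by blast
  have fB: "finite (SBR S i)" using sched_facts(2)[OF sched] finite_subset by blast
  have dAB: "SAR S i \<inter> SBR S i = {}" by (rule sched_facts(5)[OF sched])
  have fJ: "finite J" using fA fB by (simp add: J_def)
  have JT: "J \<subseteq> {1..Mslots S}" using sched_facts(1,2)[OF sched] by (auto simp: J_def)
  have N0: "N0 S > 0" and P: "Pw S t > 0" using par unfolding params_ok_def by blast+
  have hsym: "hc S t j i \<noteq> 0 \<and> hc S t i j = hc S t j i" if "j \<in> Nb S i" for j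
  proof -
    have "hc S t i j \<noteq> 0 \<and> hc S t i j = hc S t j i" using chan that unfolding channel_ok_def by blast
    then show ?thesis by metis
  qed
  have eqf: "(\<lambda>\<omega>. eff_noise S t u i (noise_of \<omega>))
      = (\<lambda>\<omega>. (\<chi> k. \<Sum>s\<in>J. a s True * \<omega> (s,k,True) + a s False * \<omega> (s,k,False)))"
  proof (intro ext)
    fix \<omega> :: "nat \<times> 'm \<times> bool \<Rightarrow> real"
    have "eff_noise S t u i (noise_of \<omega>) $ k = (\<Sum>s\<in>J. a s True * \<omega> (s,k,True) + a s False * \<omega> (s,k,False))" for k
    proof -
      have "eff_noise S t u i (noise_of \<omega>) $ k = (\<Sum>s\<in>SAR S i. (1 / sqrt (g s)) * \<omega> (s,k,True))
          + (\<Sum>s\<in>SBR S i. Wt S i (src S i s) * (Re (cc s) * \<omega> (s,k,True) - Im (cc s) * \<omega> (s,k,False)))"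
        unfolding eff_noise_def g_def[symmetric] cc_def[symmetric] by (simp add: Re_vec_def noise_of_def)
      also have "(\<Sum>s\<in>SAR S i. (1 / sqrt (g s)) * \<omega> (s,k,True)) = (\<Sum>s\<in>SAR S i. a s True * \<omega> (s,k,True) + a s False * \<omega> (s,k,False))"
        by (rule sum.cong[OF refl]) (simp add: a_def)
      also have "(\<Sum>s\<in>SBR S i. Wt S i (src S i s) * (Re (cc s) * \<omega> (s,k,True) - Im (cc s) * \<omega> (s,k,False)))
          = (\<Sum>s\<in>SBR S i. a s True * \<omega> (s,k,True) + a s False * \<omega> (s,k,False))"
      proof (rule sum.cong[OF refl])
        fix s assume "s \<in> SBR S i"
        then have "s \<notin> SAR S i" using dAB by blast
        then show "Wt S i (src S i s) * (Re (cc s) * \<omega> (s,k,True) - Im (cc s) * \<omega> (s,k,False))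
            = a s True * \<omega> (s,k,True) + a s False * \<omega> (s,k,False)"
          by (simp add: a_def algebra_simps)
      qed
      also have "(\<Sum>s\<in>SAR S i. a s True * \<omega> (s,k,True) + a s False * \<omega> (s,k,False)) + (\<Sum>s\<in>SBR S i. a s True * \<omega> (s,k,True) + a s False * \<omega> (s,k,False))
          = (\<Sum>s\<in>J. a s True * \<omega> (s,k,True) + a s False * \<omega> (s,k,False))"
        unfolding J_def by (rule sum.union_disjoint[symmetric, OF fA fB dAB])
      finally show ?thesis .
    qed
    then show "eff_noise S t u i (noise_of \<omega>) = (\<chi> k. \<Sum>s\<in>J. a s True * \<omega> (s,k,True) + a s False * \<omega> (s,k,False))"
      by (simp add: vec_eq_iff)
  qed
  define NP where "NP = Nuse S * Pw S t"
  define Gf where "Gf j = real (card (Tx S j)) * (Wt S i j)\<^sup>2 * (norm (u j))\<^sup>2 / (cmod (hc S t i j))\<^sup>2" for j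
  have termA: "(a s True)\<^sup>2 + (a s False)\<^sup>2 = Max (Gf ` NA S i s) / NP" if s: "s \<in> SAR S i" for s
  proof -
    have "Nuse S > 0" using Nuse_pos[OF sched, of s i] s by blast
    then have NPpos: "NP > 0" using P by (simp add: NP_def)
    have ne: "NA S i s \<noteq> {}" by (rule sched_facts(6)[OF sched s])
    have Gpos: "Gf j > 0" if j: "j \<in> NA S i s" for j
    proof -
      have jn: "j \<in> Nb S i" using sched_facts(7)[OF sched s] j by blast
      have h: "hc S t i j \<noteq> 0" using hsym[OF jn] by metis
      have c: "real (card (Tx S j)) > 0" using cardTx[OF sched] sched_facts(8)[OF sched s j] by blast
      have w: "Wt S i j \<noteq> 0" by (rule wd_w[OF s j])
      show ?thesis unfolding Gf_def using h c w u[of j] by simp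
    qed
    have gimg: "g s = Min ((\<lambda>j. NP / Gf j) ` NA S i s)"
      unfolding g_def gam_def
    proof (rule arg_cong[where f=Min], rule image_cong[OF refl])
      fix j assume j: "j \<in> NA S i s"
      have jn: "j \<in> Nb S i" using sched_facts(7)[OF sched s] j by blast
      have h: "hc S t j i = hc S t i j" using hsym[OF jn] by simp
      show "Nuse S * Pw S t * (cmod (hc S t j i))\<^sup>2 / (real (card (Tx S j)) * (Wt S i j)\<^sup>2 * (norm (u j))\<^sup>2) = NP / Gf j"
        unfolding Gf_def NP_def h by simp
    qed
    have "g s = NP / Max (Gf ` NA S i s)"
      unfolding gimg by (rule Min_recip[OF _ ne Gpos NPpos]) simp
    moreover have "g s > 0" unfolding g_def by (rule gam_pos[OF sched chan par wd_w u s])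
    ultimately show ?thesis using s by (simp add: a_def power_divide)
  qed
  have termB: "(a s True)\<^sup>2 + (a s False)\<^sup>2 = Gf (src S i s) / NP" if s: "s \<in> SBR S i" for s
  proof -
    let ?j = "src S i s"
    have nA: "s \<notin> SAR S i" using s dAB by blast
    have "Nuse S > 0" using Nuse_pos[OF sched, of s i] s by blast
    then have NPpos: "NP > 0" using P by (simp add: NP_def)
    have jn: "?j \<in> Nb S i" by (rule sched_facts(9)[OF sched s])
    have h: "hc S t ?j i \<noteq> 0" "hc S t i ?j = hc S t ?j i" using hsym[OF jn] by blast+
    have c: "real (card (Tx S ?j)) > 0" using cardTx[OF sched] sched_facts(10)[OF sched s] by blast
    have al: "alp S t u ?j = NP / (real (card (Tx S ?j)) * (norm (u ?j))\<^sup>2)"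
      unfolding alp_def NP_def ..
    have alpos: "alp S t u ?j > 0" unfolding al using NPpos c u[of ?j] by simp
    have "(a s True)\<^sup>2 + (a s False)\<^sup>2 = (Wt S i ?j)\<^sup>2 * (cmod (cc s))\<^sup>2"
      using nA by (simp add: a_def cmod_power2 power_mult_distrib algebra_simps)
    also have "(cmod (cc s))\<^sup>2 = 1 / (alp S t u ?j * (cmod (hc S t ?j i))\<^sup>2)"
      unfolding cc_def using alpos by (simp add: norm_divide norm_mult power_mult_distrib power_divide)
    also have "(Wt S i ?j)\<^sup>2 * (1 / (alp S t u ?j * (cmod (hc S t ?j i))\<^sup>2)) = Gf ?j / NP"
      unfolding Gf_def al h(2) using NPpos c u[of ?j] h(1) by (simp add: field_simps)
    finally show ?thesis .
  qed
  have eqv: "Ntil S t u i = (sqrt (N0 S / 2))\<^sup>2 * (\<Sum>s\<in>J. (a s True)\<^sup>2 + (a s False)\<^sup>2)"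
  proof -
    have "(\<Sum>s\<in>J. (a s True)\<^sup>2 + (a s False)\<^sup>2) = (\<Sum>s\<in>SAR S i. (a s True)\<^sup>2 + (a s False)\<^sup>2) + (\<Sum>s\<in>SBR S i. (a s True)\<^sup>2 + (a s False)\<^sup>2)"
      unfolding J_def by (rule sum.union_disjoint[OF fA fB dAB])
    also have "\<dots> = (\<Sum>s\<in>SAR S i. Max (Gf ` NA S i s) / NP) + (\<Sum>s\<in>SBR S i. Gf (src S i s) / NP)"
      using termA termB by (simp cong: sum.cong)
    also have "\<dots> = ((\<Sum>s\<in>SAR S i. Max (Gf ` NA S i s)) + (\<Sum>s\<in>SBR S i. Gf (src S i s))) / NP"
      by (simp add: sum_divide_distrib add_divide_distrib)
    finally have e: "(\<Sum>s\<in>J. (a s True)\<^sup>2 + (a s False)\<^sup>2) = ((\<Sum>s\<in>SAR S i. Max (Gf ` NA S i s)) + (\<Sum>s\<in>SBR S i. Gf (src S i s))) / NP" .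
    have "Ntil S t u i = 1/2 * N0 S / NP * ((\<Sum>s\<in>SAR S i. Max (Gf ` NA S i s)) + (\<Sum>s\<in>SBR S i. Gf (src S i s)))"
      unfolding Ntil_def NP_def Gf_def ..
    then show ?thesis unfolding e using N0 by simp
  qed
  have "distr (noise_space S) borel (\<lambda>\<omega>. eff_noise S t u i (noise_of \<omega>))
      = distr (PiM ({1..Mslots S} \<times> (UNIV::'m set) \<times> (UNIV::bool set)) (\<lambda>_. density lborel (normal_density 0 (sqrt (N0 S / 2))))) borel
      (\<lambda>\<omega>. (\<chi> k. \<Sum>s\<in>J. a s True * \<omega> (s,k,True) + a s False * \<omega> (s,k,False)) :: real^'m)"
    unfolding eqf noise_space_def ..
  also have "\<dots> = gauss_vec ((sqrt (N0 S / 2))\<^sup>2 * (\<Sum>s\<in>J. (a s True)\<^sup>2 + (a s False)\<^sup>2))"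
    by (rule vec_law[OF _ fJ JT]) (simp add: N0)
  also have "\<dots> = gauss_vec (Ntil S t u i)" unfolding eqv ..
  finally show ?thesis .
qed

theorem lemma5p1:
  fixes S :: "('v::finite, 'd::finite, 'm::finite) lsys"
  assumes graph: "conn_graph (Nb S)"
    and mixing: "mixing_ok (Nb S) (Wt S)"
    and coding: "coding_ok S"
    and sched: "schedule_ok S"
    and chan: "channel_ok S"
    and par: "params_ok S"
    and wd_u: "\<And>t j. uvec S t j \<noteq> 0"
    and wd_w: "\<And>j s i. s \<in> SAR S j \<Longrightarrow> i \<in> NA S j s \<Longrightarrow> Wt S j i \<noteq> 0"
  shows "(\<forall>t i. theta S (Suc t) i =
            theta_half S t i
            + zeta S t *\<^sub>R (\<Sum>j\<in>Nb S i \<union> {i}. Wt S i j *\<^sub>R (theta_hat S (Suc t) j - theta_hat S (Suc t) i))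
            + zeta S t *\<^sub>R (\<Sum>\<tau>\<le>t. decomp S \<tau> (eff_noise S \<tau> (uvec S \<tau>) i (\<lambda>s. noise S \<tau> s i))))
       \<and> (\<forall>t i (u :: 'v \<Rightarrow> real^'d). (\<forall>j. u j \<noteq> 0) \<longrightarrow>
            distr (noise_space S) borel (\<lambda>\<omega>. eff_noise S t u i (noise_of \<omega>)) = gauss_vec (Ntil S t u i))"
proof (intro conjI allI impI)
  fix t i
  show "theta S (Suc t) i =
            theta_half S t i
            + zeta S t *\<^sub>R (\<Sum>j\<in>Nb S i \<union> {i}. Wt S i j *\<^sub>R (theta_hat S (Suc t) j - theta_hat S (Suc t) i))
            + zeta S t *\<^sub>R (\<Sum>\<tau>\<le>t. decomp S \<tau> (eff_noise S \<tau> (uvec S \<tau>) i (\<lambda>s. noise S \<tau> s i)))"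
    by (rule part1[OF graph mixing sched chan par wd_u wd_w])
next
  fix t i and u :: "'v \<Rightarrow> real^'d"
  assume "\<forall>j. u j \<noteq> 0"
  then have u: "\<And>j. u j \<noteq> 0" by blast
  show "distr (noise_space S) borel (\<lambda>\<omega>. eff_noise S t u i (noise_of \<omega>)) = gauss_vec (Ntil S t u i)"
    by (rule part2[OF sched chan par wd_w u])
qed

end
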